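(* Let $\mathcal{H}_A, \mathcal{H}_B$ be complex Hilbert spaces, $A \in \mathcal{B}(\mathcal{H}_A)$, $B \in \mathcal{B}(\mathcal{H}_B)$ with $\sigma(A^2) \cap \sigma(B^2) = \varnothing$, and let $T \in \mathcal{B}(\mathcal{H})$ be similar to $A \oplus B$ (via an invertible $S : \mathcal{H}_A \oplus \mathcal{H}_B \to \mathcal{H}$). Then $T \in \mathfrak{c}(\mathrm{nil}_2)$ if and only if $A \in \mathfrak{c}(\mathrm{nil}_2)$ and $B \in \mathfrak{c}(\mathrm{nil}_2)$.
   Context: For a Hilbert space $\mathcal{K}$, an operator $X \in \mathcal{B}(\mathcal{K})$ lies in $\mathfrak{c}(\mathrm{nil}_2)$ if $X = MN - NM$ for some $M, N \in \mathcal{B}(\mathcal{K})$ with $M^2 = 0 = N^2$ (the ambient space being the one on which $X$ acts). *)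

theory Defs
  imports "HOL-Analysis.Analysis"
begin

text \<open>A complex Hilbert space is encoded as a real Hilbert space
  (type class real_inner + complete_space, with inner product the real part of the
  complex inner product) together with a complex structure J (multiplication by i):
  a bounded real-linear map with J (J x) = - x which preserves the real inner product.\<close>

definition complex_structure :: "('a::real_inner \<Rightarrow> 'a) \<Rightarrow> bool" where
  "complex_structure J \<longleftrightarrow> bounded_linear J \<and> (\<forall>x. J (J x) = - x)
     \<and> (\<forall>x y. inner (J x) (J y) = inner x y)"

definition cscale :: "('a::real_vector \<Rightarrow> 'a) \<Rightarrow> complex \<Rightarrow> 'a \<Rightarrow> 'a" where
  "cscale J c x = Re c *\<^sub>R x + Im c *\<^sub>R J x"

definition cbounded :: "('a::real_normed_vector \<Rightarrow> 'a) \<Rightarrow> ('b::real_normed_vector \<Rightarrow> 'b)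
    \<Rightarrow> ('a \<Rightarrow> 'b) \<Rightarrow> bool" where
  "cbounded J1 J2 X \<longleftrightarrow> bounded_linear X \<and> (\<forall>x. X (J1 x) = J2 (X x))"

definition cinvertible :: "('a::real_normed_vector \<Rightarrow> 'a) \<Rightarrow> ('b::real_normed_vector \<Rightarrow> 'b)
    \<Rightarrow> ('a \<Rightarrow> 'b) \<Rightarrow> bool" where
  "cinvertible J1 J2 X \<longleftrightarrow> cbounded J1 J2 X \<and>
     (\<exists>Y. cbounded J2 J1 Y \<and> Y \<circ> X = id \<and> X \<circ> Y = id)"

definition cspectrum :: "('a::real_normed_vector \<Rightarrow> 'a) \<Rightarrow> ('a \<Rightarrow> 'a) \<Rightarrow> complex set" where
  "cspectrum J X = {c. \<not> cinvertible J J (\<lambda>x. X x - cscale J c x)}"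

definition c_nil2 :: "('a::real_normed_vector \<Rightarrow> 'a) \<Rightarrow> ('a \<Rightarrow> 'a) \<Rightarrow> bool" where
  "c_nil2 J X \<longleftrightarrow> (\<exists>M N. cbounded J J M \<and> cbounded J J N \<and>
      M \<circ> M = (\<lambda>x. 0) \<and> N \<circ> N = (\<lambda>x. 0) \<and> X = (\<lambda>x. M (N x) - N (M x)))"

definition dsum :: "('a \<Rightarrow> 'a) \<Rightarrow> ('b \<Rightarrow> 'b) \<Rightarrow> ('a \<times> 'b \<Rightarrow> 'a \<times> 'b)" where
  "dsum A B = (\<lambda>(x, y). (A x, B y))"

end

theory Submission
  imports Defs "HOL-Complex_Analysis.Complex_Analysis"
begin



lemma cs_J_linear:
  assumes "complex_structure J"
  shows "linear J" "J (x + y) = J x + J y" "J (r *\<^sub>R x) = r *\<^sub>R J x" "J (J x) = - x"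
    "J 0 = 0" "J (x - y) = J x - J y" "J (- x) = - J x"
  using assms unfolding complex_structure_def
  by (auto simp: bounded_linear.linear linear_add linear_scale linear_0 linear_diff linear_neg)

lemma cs_J_norm:
  assumes "complex_structure J"
  shows "norm (J x) = norm x" "inner x (J x) = 0" "inner (J x) y = - inner x (J y)"
proof -
  have ip: "\<And>x y. inner (J x) (J y) = inner x y" using assms unfolding complex_structure_def by auto
  show "norm (J x) = norm x" by (simp add: norm_eq_sqrt_inner ip)
  have g: "inner (J a) b = - inner a (J b)" for a b
    using ip[of "J a" b] cs_J_linear[OF assms] by simp
  show "inner (J x) y = - inner x (J y)" by (rule g)
  have "inner (J x) x = - inner x (J x)" by (rule g)
  then show "inner x (J x) = 0" by (simp add: inner_commute)
qed

lemma cscale_add_left: "cscale J (a + b) x = cscale J a x + cscale J b x"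
  by (simp add: cscale_def scaleR_add_left)

lemma cscale_diff_left: "cscale J (a - b) x = cscale J a x - cscale J b x"
  by (simp add: cscale_def scaleR_diff_left)

lemma cscale_zero [simp]: "cscale J 0 x = 0"
  by (simp add: cscale_def)

lemma cscale_one [simp]: "cscale J 1 x = x"
  by (simp add: cscale_def)

lemma cscale_add_right:
  assumes "complex_structure J"
  shows "cscale J c (x + y) = cscale J c x + cscale J c y"
  by (simp add: cscale_def cs_J_linear(2)[OF assms] scaleR_add_right)

lemma cscale_diff_right:
  assumes "complex_structure J"
  shows "cscale J c (x - y) = cscale J c x - cscale J c y"
  by (simp add: cscale_def cs_J_linear(6)[OF assms] scaleR_diff_right)

lemma cscale_zero_right [simp]:
  assumes "complex_structure J"
  shows "cscale J c 0 = 0"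
  using cs_J_linear[OF assms] by (simp add: cscale_def)

lemma cscale_mult:
  assumes "complex_structure J"
  shows "cscale J (a * b) x = cscale J a (cscale J b x)"
  using cs_J_linear[OF assms] by (simp add: cscale_def algebra_simps)

lemma cscale_minus_one:
  shows "cscale J (-1) x = - x"
  by (simp add: cscale_def)

lemma cscale_norm:
  assumes "complex_structure J"
  shows "norm (cscale J c x) = cmod c * norm x"
proof -
  have "(norm (cscale J c x))^2 = inner (Re c *\<^sub>R x + Im c *\<^sub>R J x) (Re c *\<^sub>R x + Im c *\<^sub>R J x)"
    by (simp add: cscale_def power2_norm_eq_inner)
  also have "\<dots> = (Re c)^2 * (norm x)^2 + (Im c)^2 * (norm (J x))^2"
    using cs_J_norm(2)[OF assms, of x] power2_norm_eq_inner[of x, symmetric] power2_norm_eq_inner[of "J x", symmetric]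
    by (simp add: inner_add_left inner_add_right power2_norm_eq_inner inner_commute power2_eq_square algebra_simps)
  also have "\<dots> = (cmod c * norm x)^2"
    using cs_J_norm(1)[OF assms, of x] by (simp add: cmod_def power_mult_distrib algebra_simps)
  finally show ?thesis
    by (metis norm_ge_zero norm_mult power2_eq_iff_nonneg real_norm_def zero_le_mult_iff abs_of_nonneg)
qed

lemma cbounded_cscale:
  assumes "cbounded J1 J2 X"
  shows "X (cscale J1 c x) = cscale J2 c (X x)"
proof -
  have bl: "bounded_linear X" and XJ: "\<And>x. X (J1 x) = J2 (X x)" using assms unfolding cbounded_def by auto
  show ?thesis
    using bl XJ by (simp add: cscale_def linear_add linear_scale bounded_linear.linear)
qed

lemma cbounded_linear:
  assumes "cbounded J1 J2 X"
  shows "X (x + y) = X x + X y" "X (x - y) = X x - X y" "X 0 = 0" "X (- x) = - X x" "X (r *\<^sub>R x) = r *\<^sub>R X x"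
  using assms unfolding cbounded_def
  by (auto simp: bounded_linear.linear linear_add linear_scale linear_0 linear_diff linear_neg)

lemma cbounded_comp:
  assumes "cbounded J1 J2 X" "cbounded J2 J3 Y"
  shows "cbounded J1 J3 (Y \<circ> X)"
  using assms unfolding cbounded_def by (auto simp: o_def intro: bounded_linear_compose)

lemma cbounded_comp':
  assumes "cbounded J1 J2 X" "cbounded J2 J3 Y"
  shows "cbounded J1 J3 (\<lambda>x. Y (X x))"
  using cbounded_comp[OF assms] by (simp add: o_def)

lemma cbounded_id: "cbounded J J (\<lambda>x. x)"
  unfolding cbounded_def by (simp add: bounded_linear_ident)

lemma cbounded_cscale_op:
  assumes "complex_structure J"
  shows "cbounded J J (cscale J c)"
proof -
  have bJ: "bounded_linear J" using assms unfolding complex_structure_def by auto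
  have "bounded_linear (\<lambda>x. Re c *\<^sub>R x + Im c *\<^sub>R J x)"
    by (intro bounded_linear_add bounded_linear_scaleR_right bounded_linear_ident bounded_linear_compose[OF bounded_linear_scaleR_right bJ])
  then show ?thesis unfolding cbounded_def
    using cs_J_linear[OF assms] by (simp add: cscale_def[abs_def] cscale_def)
qed






lemma cbounded_diff:
  assumes "cbounded J1 J2 X" "cbounded J1 J2 Y" "complex_structure J2"
  shows "cbounded J1 J2 (\<lambda>x. X x - Y x)"
  using assms cs_J_linear(6)[OF assms(3)] unfolding cbounded_def
  by (auto intro: bounded_linear_sub)

definition Lop :: "('a::real_vector \<Rightarrow> 'a) \<Rightarrow> ('a \<Rightarrow> 'a) \<Rightarrow> complex \<Rightarrow> 'a \<Rightarrow> 'a" where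
  "Lop J P c = (\<lambda>x. P x - cscale J c x)"

definition res :: "('a::real_vector \<Rightarrow> 'a) \<Rightarrow> ('a \<Rightarrow> 'a) \<Rightarrow> complex \<Rightarrow> 'a \<Rightarrow> 'a" where
  "res J P c = inv (Lop J P c)"

lemma Lop_cbounded:
  assumes "complex_structure J" "cbounded J J P"
  shows "cbounded J J (Lop J P c)"
  unfolding Lop_def by (rule cbounded_diff[OF assms(2) cbounded_cscale_op[OF assms(1)] assms(1)])

lemma neumann:
  fixes J :: "'a::{real_inner,complete_space} \<Rightarrow> 'a"
  assumes cs: "complex_structure J" and K: "cbounded J J K"
    and bnd: "\<And>x. norm (K x) \<le> q * norm x" and q: "0 \<le> q" "q < 1"
  shows "\<exists>Y. cbounded J J Y \<and> (\<forall>x. Y (x - K x) = x) \<and> (\<forall>y. Y y - K (Y y) = y)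
     \<and> (\<forall>y. norm (Y y) \<le> norm y / (1 - q))"
proof -
  note KL = cbounded_linear[OF K]
  have uniq: "x = x'" if "x - K x = x' - K x'" for x x'
  proof -
    have "x - x' = K x - K x'" using that by (simp add: algebra_simps)
    then have "x - x' = K (x - x')" using KL(2)[of x x'] by simp
    then have "norm (x - x') \<le> q * norm (x - x')" by (subst (1) \<open>x - x' = K (x - x')\<close>) (rule bnd)
    then have "(1 - q) * norm (x - x') \<le> 0" by (simp add: algebra_simps)
    then have "norm (x - x') \<le> 0" using q by (simp add: mult_le_0_iff)
    then show ?thesis by simp
  qed
  have ex: "\<exists>x. x - K x = y" for y
  proof -
    have "\<exists>!x. y + K x = x"
    proof (rule banach_fix_type[OF q])
      show "\<forall>x x'. dist (y + K x) (y + K x') \<le> q * dist x x'"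
        using bnd by (simp add: dist_norm flip: KL(2))
    qed
    then obtain x where "y + K x = x" by blast
    then have "x - K x = y" by (simp add: algebra_simps)
    then show ?thesis by blast
  qed
  define Y where "Y y = (THE x. x - K x = y)" for y
  have Yeq: "Y y - K (Y y) = y" for y
  proof -
    obtain x where x: "x - K x = y" using ex by blast
    have "Y y = x" unfolding Y_def
    proof (rule the_equality[where P="\<lambda>x. x - K x = y"])
      show "x - K x = y" by (rule x)
    next
      fix x' assume "x' - K x' = y"
      then have "x' - K x' = x - K x" using x by simp
      then show "x' = x" by (rule uniq)
    qed
    then show ?thesis using x by simp
  qed
  have Ychar: "Y y = x" if "x - K x = y" for x y
    using Yeq[of y] that uniq by metis
  have Ynorm: "norm (Y y) \<le> norm y / (1 - q)" for y
  proof -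
    have "norm (Y y) \<le> norm y + norm (K (Y y))"
      using Yeq[of y] by (metis add_diff_cancel norm_triangle_ineq diff_add_cancel)
    also have "\<dots> \<le> norm y + q * norm (Y y)" using bnd by simp
    finally have "(1 - q) * norm (Y y) \<le> norm y" by (simp add: algebra_simps)
    then show ?thesis using q by (simp add: field_simps)
  qed
  have Yadd: "Y (a + b) = Y a + Y b" for a b
  proof (rule Ychar)
    have "Y a + Y b - K (Y a + Y b) = (Y a - K (Y a)) + (Y b - K (Y b))"
      using KL(1)[of "Y a" "Y b"] by (simp add: algebra_simps)
    then show "Y a + Y b - K (Y a + Y b) = a + b" using Yeq by simp
  qed
  have Yscale: "Y (r *\<^sub>R a) = r *\<^sub>R Y a" for r a
  proof (rule Ychar)
    have "r *\<^sub>R Y a - K (r *\<^sub>R Y a) = r *\<^sub>R (Y a - K (Y a))"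
      using KL(5)[of r "Y a"] by (simp add: scaleR_diff_right)
    then show "r *\<^sub>R Y a - K (r *\<^sub>R Y a) = r *\<^sub>R a" using Yeq by simp
  qed
  have KJ: "K (J x) = J (K x)" for x using K unfolding cbounded_def by auto
  have YJ: "Y (J a) = J (Y a)" for a
  proof (rule Ychar)
    have "J (Y a) - K (J (Y a)) = J (Y a - K (Y a))"
      using KJ[of "Y a"] cs_J_linear(6)[OF cs, of "Y a" "K (Y a)"] by simp
    then show "J (Y a) - K (J (Y a)) = J a" using Yeq by simp
  qed
  have "bounded_linear Y"
    by (rule bounded_linear_intro[where K="1 / (1 - q)"]) (use Yadd Yscale Ynorm in auto)
  then have "cbounded J J Y" unfolding cbounded_def using YJ by auto
  moreover have "\<forall>x. Y (x - K x) = x" using Ychar by auto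
  ultimately show ?thesis using Yeq Ynorm by blast
qed




lemma not_spec_iff: "c \<notin> cspectrum J P \<longleftrightarrow> cinvertible J J (Lop J P c)"
  unfolding cspectrum_def Lop_def by simp

lemma res_inverse:
  assumes "c \<notin> cspectrum J P"
  shows "cbounded J J (res J P c)" "\<And>x. res J P c (Lop J P c x) = x" "\<And>y. Lop J P c (res J P c y) = y"
proof -
  obtain Y where Y: "cbounded J J Y" "Y \<circ> Lop J P c = id" "Lop J P c \<circ> Y = id"
    using assms unfolding not_spec_iff cinvertible_def by blast
  have "res J P c = Y" unfolding res_def using Y inv_unique_comp by blast
  then show "cbounded J J (res J P c)" using Y(1) by simp
  show "\<And>x. res J P c (Lop J P c x) = x" using Y(2) \<open>res J P c = Y\<close> by (simp add: fun_eq_iff)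
  show "\<And>y. Lop J P c (res J P c y) = y" using Y(3) \<open>res J P c = Y\<close> by (simp add: fun_eq_iff)
qed

lemma factor_inv:
  fixes J :: "'a::{real_inner,complete_space} \<Rightarrow> 'a"
  assumes cs: "complex_structure J" and P: "cbounded J J P"
    and E: "cbounded J J E" and Ei: "cbounded J J Einv"
    and EE: "\<And>x. Einv (E x) = x" "\<And>y. E (Einv y) = y"
    and K: "cbounded J J K" and bnd: "\<And>x. norm (K x) \<le> q * norm x" and q: "0 \<le> q" "q < 1"
    and fac: "\<And>x. Lop J P c x = E (x - K x)"
  shows "c \<notin> cspectrum J P \<and> (\<forall>y. norm (res J P c y) \<le> norm (Einv y) / (1 - q))"
proof -
  obtain Y where Y: "cbounded J J Y" "\<And>x. Y (x - K x) = x" "\<And>y. Y y - K (Y y) = y"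
     "\<And>y. norm (Y y) \<le> norm y / (1 - q)"
    using neumann[OF cs K bnd q] by blast
  define R where "R = (\<lambda>y. Y (Einv y))"
  have Rb: "cbounded J J R" unfolding R_def by (rule cbounded_comp'[OF Ei Y(1)])
  have R1: "R (Lop J P c x) = x" for x unfolding R_def fac EE Y by simp
  have R2: "Lop J P c (R y) = y" for y unfolding R_def fac Y EE by simp
  have "cinvertible J J (Lop J P c)"
    unfolding cinvertible_def
    using Lop_cbounded[OF cs P] Rb R1 R2 by (auto simp: fun_eq_iff intro!: exI[of _ R])
  then have ns: "c \<notin> cspectrum J P" using not_spec_iff by blast
  have "res J P c = R" unfolding res_def
    by (rule inv_unique_comp) (use R1 R2 in \<open>auto simp: fun_eq_iff\<close>)
  then show ?thesis using ns Y(4) by (simp add: R_def)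
qed


lemma perturb:
  fixes J :: "'a::{real_inner,complete_space} \<Rightarrow> 'a"
  assumes cs: "complex_structure J" and P: "cbounded J J P" and mu: "\<mu> \<notin> cspectrum J P"
    and Kb: "\<And>y. norm (res J P \<mu> y) \<le> K * norm y" and K0: "0 \<le> K" and small: "cmod (l - \<mu>) * K < 1"
  shows "l \<notin> cspectrum J P \<and> (\<forall>y. norm (res J P l y) \<le> K / (1 - cmod (l - \<mu>) * K) * norm y)"
proof -
  note R0 = res_inverse[OF mu]
  define d where "d = l - \<mu>"
  define Kop where "Kop = (%x. res J P \<mu> (cscale J d x))"
  have Kb': "cbounded J J Kop" unfolding Kop_def by (rule cbounded_comp'[OF cbounded_cscale_op[OF cs] R0(1)])
  have bnd: "norm (Kop x) \<le> (cmod d * K) * norm x" for x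
    unfolding Kop_def using Kb[of "cscale J d x"] cscale_norm[OF cs, of d x] by (simp add: algebra_simps)
  have fac: "Lop J P l x = Lop J P \<mu> (x - Kop x)" for x
  proof -
    have "Lop J P \<mu> (x - Kop x) = Lop J P \<mu> x - Lop J P \<mu> (Kop x)"
      using cbounded_linear(2)[OF Lop_cbounded[OF cs P]] by simp
    also have "\<dots> = Lop J P \<mu> x - cscale J d x" unfolding Kop_def R0(3) ..
    also have "\<dots> = Lop J P l x"
      unfolding Lop_def d_def using cscale_add_left[of J \<mu> "l - \<mu>" x] by simp
    finally show ?thesis by simp
  qed
  have "l \<notin> cspectrum J P \<and> (\<forall>y. norm (res J P l y) \<le> norm (res J P \<mu> y) / (1 - cmod d * K))"
    by (rule factor_inv[OF cs P Lop_cbounded[OF cs P] R0(1) R0(2) R0(3) Kb' bnd])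
      (use small K0 fac in \<open>auto simp: d_def\<close>)
  moreover have "norm (res J P \<mu> y) / (1 - cmod d * K) \<le> K / (1 - cmod d * K) * norm y" for y
  proof -
    have "norm (res J P \<mu> y) / (1 - cmod d * K) \<le> K * norm y / (1 - cmod d * K)"
      by (rule divide_right_mono[OF Kb[of y]]) (use small in \<open>simp add: d_def\<close>)
    then show ?thesis by simp
  qed
  ultimately show ?thesis unfolding d_def by (meson order_trans)
qed

lemma large:
  fixes J :: "'a::{real_inner,complete_space} \<Rightarrow> 'a"
  assumes cs: "complex_structure J" and P: "cbounded J J P"
    and Pb: "\<And>x. norm (P x) \<le> C * norm x" and C0: "0 \<le> C" and big: "C < cmod l"
  shows "l \<notin> cspectrum J P \<and> (\<forall>y. norm (res J P l y) \<le> norm y / (cmod l - C))"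
proof -
  have l0: "l \<noteq> 0" using big C0 by auto
  define Kop where "Kop = (%x. cscale J (1 / l) (P x))"
  have Kb': "cbounded J J Kop" unfolding Kop_def by (rule cbounded_comp'[OF P cbounded_cscale_op[OF cs]])
  have bnd: "norm (Kop x) \<le> (C / cmod l) * norm x" for x
    unfolding Kop_def using Pb[of x] cscale_norm[OF cs, of "1/l" "P x"] l0
    by (simp add: norm_divide divide_right_mono field_simps)
  have m1: "cscale J (- l) (cscale J (1 / l) v) = - v" for v
    using cscale_mult[OF cs, of "- l" "1 / l" v, symmetric] l0 by (simp add: cscale_minus_one)
  have m2: "cscale J (- 1 / l) (cscale J (- l) v) = v" for v
    using cscale_mult[OF cs, of "- 1 / l" "- l" v, symmetric] l0 by simp
  have m3: "cscale J (- l) (cscale J (- 1 / l) v) = v" for v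
    using cscale_mult[OF cs, of "- l" "- 1 / l" v, symmetric] l0 by simp
  have neg: "cscale J (- l) v = - cscale J l v" for v by (simp add: cscale_def)
  have fac: "Lop J P l x = cscale J (- l) (x - Kop x)" for x
    unfolding Lop_def Kop_def cscale_diff_right[OF cs] m1 unfolding neg by simp
  have q: "0 \<le> C / cmod l" "C / cmod l < 1" using C0 big by (auto simp: divide_less_eq)
  have r: "l \<notin> cspectrum J P \<and> (\<forall>y. norm (res J P l y) \<le> norm (cscale J (- 1 / l) y) / (1 - C / cmod l))"
    by (rule factor_inv[OF cs P cbounded_cscale_op[OF cs] cbounded_cscale_op[OF cs] m2 m3 Kb' bnd q fac])
  have "norm (cscale J (- 1 / l) y) / (1 - C / cmod l) = norm y / (cmod l - C)" for y
    using cscale_norm[OF cs, of "- 1 / l" y] l0 big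
    by (simp add: norm_divide field_simps)
  then show ?thesis using r by auto
qed




lemma psi_cscale:
  assumes "bounded_linear \<psi>" "\<And>w. \<psi> (J w) = \<i> * \<psi> w"
  shows "\<psi> (cscale J c w) = c * \<psi> w"
proof -
  have l: "linear \<psi>" using assms(1) bounded_linear.linear by blast
  have "\<psi> (cscale J c w) = Re c *\<^sub>R \<psi> w + Im c *\<^sub>R \<psi> (J w)"
    unfolding cscale_def using l by (simp add: linear_add linear_scale)
  also have "\<dots> = (of_real (Re c) + \<i> * of_real (Im c)) * \<psi> w"
    using assms(2) by (simp add: scaleR_conv_of_real algebra_simps)
  also have "\<dots> = c * \<psi> w" using complex_eq[of c] by simp
  finally show ?thesis .
qed

lemma res_near:
  fixes J :: "'a::{real_inner,complete_space} \<Rightarrow> 'a"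
  assumes cs: "complex_structure J" and P: "cbounded J J P" and l0: "l0 \<notin> cspectrum J P"
  shows "\<exists>K>0. \<exists>r>0. (\<forall>y. norm (res J P l0 y) \<le> K * norm y) \<and>
     (\<forall>l. cmod (l - l0) < r \<longrightarrow> l \<notin> cspectrum J P \<and> (\<forall>y. norm (res J P l y) \<le> 2 * K * norm y))"
proof -
  have "bounded_linear (res J P l0)" using res_inverse(1)[OF l0] unfolding cbounded_def by blast
  then obtain K where K: "K > 0" "\<And>y. norm (res J P l0 y) \<le> norm y * K"
    using bounded_linear.pos_bounded by blast
  have Kb: "\<And>y. norm (res J P l0 y) \<le> K * norm y" using K(2) by (simp add: mult.commute)
  have near: "l \<notin> cspectrum J P \<and> (\<forall>y. norm (res J P l y) \<le> 2 * K * norm y)"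
    if "cmod (l - l0) < 1 / (2 * K)" for l
  proof -
    have s: "cmod (l - l0) * K < 1 / 2" using that K(1) by (simp add: field_simps)
    then have "cmod (l - l0) * K < 1" by simp
    from perturb[OF cs P l0 Kb _ this] K(1)
    have r: "l \<notin> cspectrum J P \<and> (\<forall>y. norm (res J P l y) \<le> K / (1 - cmod (l - l0) * K) * norm y)" by simp
    have kk: "K / (1 - cmod (l - l0) * K) \<le> 2 * K"
      using s K(1) by (simp add: field_simps)
    have "K / (1 - cmod (l - l0) * K) * norm y \<le> 2 * K * norm y" for y
      by (rule mult_right_mono[OF kk norm_ge_zero])
    then show ?thesis using r by (meson order_trans)
  qed
  show ?thesis
    by (rule exI[of _ K], simp add: K(1), rule exI[of _ "1 / (2 * K)"]) (use K(1) Kb near in auto)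
qed

lemma res_open:
  fixes J :: "'a::{real_inner,complete_space} \<Rightarrow> 'a"
  assumes cs: "complex_structure J" and P: "cbounded J J P" and l0: "l0 \<notin> cspectrum J P"
  shows "eventually (\<lambda>l. l \<notin> cspectrum J P) (nhds l0)"
proof -
  obtain K r where "r > 0" "\<forall>l. cmod (l - l0) < r \<longrightarrow> l \<notin> cspectrum J P"
    using res_near[OF assms] by blast
  then show ?thesis unfolding eventually_nhds_metric by (auto simp: dist_norm)
qed

lemma res_ident:
  fixes J :: "'a::{real_inner,complete_space} \<Rightarrow> 'a"
  assumes cs: "complex_structure J" and P: "cbounded J J P"
    and l: "l \<notin> cspectrum J P" and m: "m \<notin> cspectrum J P"
  shows "res J P l w - res J P m w = cscale J (l - m) (res J P l (res J P m w))"
proof -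
  note Rl = res_inverse[OF l] and Rm = res_inverse[OF m]
  define z where "z = res J P m w"
  have "res J P l w - res J P m w = res J P l (Lop J P m z) - res J P l (Lop J P l z)"
    unfolding z_def Rl(2) Rm(3) ..
  also have "\<dots> = res J P l (Lop J P m z - Lop J P l z)"
    using cbounded_linear(2)[OF Rl(1)] by simp
  also have "Lop J P m z - Lop J P l z = cscale J (l - m) z"
    unfolding Lop_def cscale_diff_left by simp
  also have "res J P l (cscale J (l - m) z) = cscale J (l - m) (res J P l z)"
    by (rule cbounded_cscale[OF Rl(1)])
  finally show ?thesis unfolding z_def .
qed

lemma res_deriv:
  fixes J :: "'a::{real_inner,complete_space} \<Rightarrow> 'a"
  assumes cs: "complex_structure J" and P: "cbounded J J P" and l0: "l0 \<notin> cspectrum J P"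
    and psi: "bounded_linear \<psi>" "\<And>w. \<psi> (J w) = \<i> * \<psi> w"
  shows "((\<lambda>l. \<psi> (res J P l w)) has_field_derivative \<psi> (res J P l0 (res J P l0 w))) (at l0)"
proof -
  obtain K r where K: "K > 0" "r > 0" "\<And>y. norm (res J P l0 y) \<le> K * norm y"
    and near: "\<And>l. cmod (l - l0) < r \<Longrightarrow> l \<notin> cspectrum J P \<and> (\<forall>y. norm (res J P l y) \<le> 2 * K * norm y)"
    using res_near[OF assms(1-3)] by blast
  define v where "v = res J P l0 w"
  have ev: "eventually (\<lambda>l. cmod (l - l0) < r \<and> l \<noteq> l0) (at l0)"
    unfolding eventually_at using K(2) by (auto simp: dist_norm intro!: exI[of _ r])
  have bnd: "norm (res J P l v - res J P l0 v) \<le> (2 * K * (K * norm v)) * cmod (l - l0)"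
    if "cmod (l - l0) < r" for l
  proof -
    have ln: "l \<notin> cspectrum J P" and b: "\<And>y. norm (res J P l y) \<le> 2 * K * norm y" using near[OF that] by auto
    have "norm (res J P l v - res J P l0 v) = cmod (l - l0) * norm (res J P l (res J P l0 v))"
      unfolding res_ident[OF cs P ln l0] cscale_norm[OF cs] ..
    also have "\<dots> \<le> cmod (l - l0) * (2 * K * (K * norm v))"
    proof (rule mult_left_mono)
      have "norm (res J P l (res J P l0 v)) \<le> 2 * K * norm (res J P l0 v)" by (rule b)
      also have "\<dots> \<le> 2 * K * (K * norm v)" using K(1) K(3)[of v] by simp
      finally show "norm (res J P l (res J P l0 v)) \<le> 2 * K * (K * norm v)" .
    qed simp
    finally show ?thesis by (simp add: mult.commute)
  qed
  have lim0: "((\<lambda>l. res J P l v - res J P l0 v) \<longlongrightarrow> 0) (at l0)"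
  proof (rule Lim_null_comparison)
    show "eventually (\<lambda>l. norm (res J P l v - res J P l0 v) \<le> (2 * K * (K * norm v)) * cmod (l - l0)) (at l0)"
      using ev by eventually_elim (use bnd in auto)
    have "((\<lambda>l. (2 * K * (K * norm v)) * cmod (l - l0)) \<longlongrightarrow> (2 * K * (K * norm v)) * cmod (l0 - l0)) (at l0)"
      by (intro tendsto_intros)
    then show "((\<lambda>l. (2 * K * (K * norm v)) * cmod (l - l0)) \<longlongrightarrow> 0) (at l0)" by simp
  qed
  then have "((\<lambda>l. res J P l v) \<longlongrightarrow> res J P l0 v) (at l0)" by (rule LIM_zero_cancel)
  then have lim: "((\<lambda>l. \<psi> (res J P l v)) \<longlongrightarrow> \<psi> (res J P l0 v)) (at l0)"
    by (rule bounded_linear.tendsto[OF psi(1)])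
  have q: "(\<psi> (res J P l w) - \<psi> (res J P l0 w)) / (l - l0) = \<psi> (res J P l v)"
    if "cmod (l - l0) < r \<and> l \<noteq> l0" for l
  proof -
    have ln: "l \<notin> cspectrum J P" using near that by auto
    have "\<psi> (res J P l w) - \<psi> (res J P l0 w) = \<psi> (res J P l w - res J P l0 w)"
      using psi(1) by (simp add: linear_diff bounded_linear.linear)
    also have "\<dots> = (l - l0) * \<psi> (res J P l v)"
      unfolding res_ident[OF cs P ln l0] psi_cscale[OF psi] v_def ..
    finally show ?thesis using that by simp
  qed
  show ?thesis unfolding has_field_derivative_iff v_def[symmetric]
    by (rule Lim_transform_eventually[OF lim]) (use ev in \<open>eventually_elim, use q[folded v_def] in auto\<close>)
qed




definition phi :: "('a::real_inner \<Rightarrow> 'a) \<Rightarrow> 'a \<Rightarrow> 'a \<Rightarrow> complex" where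
  "phi J v w = complex_of_real (inner w v) + \<i> * complex_of_real (inner w (J v))"

lemma phi_bl: "bounded_linear (phi J v)"
  unfolding phi_def[abs_def]
  by (intro bounded_linear_add bounded_linear_compose[OF bounded_linear_of_real bounded_linear_inner_left]
      bounded_linear_compose[OF bounded_linear_mult_right bounded_linear_compose[OF bounded_linear_of_real bounded_linear_inner_left]])

lemma phi_J:
  assumes cs: "complex_structure J"
  shows "phi J v (J w) = \<i> * phi J v w"
proof -
  have ip: "inner (J w) (J v) = inner w v" using cs unfolding complex_structure_def by auto
  have "inner (J w) v = - inner w (J v)" by (rule cs_J_norm(3)[OF cs])
  then show ?thesis unfolding phi_def ip by (simp add: algebra_simps)
qed

lemma phi_self: "Re (phi J w w) = inner w w"
  unfolding phi_def by simp

lemma rosenblum: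
  fixes JA :: "'a::{real_inner,complete_space} \<Rightarrow> 'a" and JB :: "'b::{real_inner,complete_space} \<Rightarrow> 'b"
  assumes csA: "complex_structure JA" and csB: "complex_structure JB"
    and P: "cbounded JA JA P" and Q: "cbounded JB JB Q" and X: "cbounded JB JA X"
    and disj: "cspectrum JA P \<inter> cspectrum JB Q = {}"
    and inter: "\<And>y. P (X y) = X (Q y)"
  shows "X u = 0"
proof -
  have "bounded_linear P" using P unfolding cbounded_def by blast
  then obtain C where C: "C > 0" "\<And>x. norm (P x) \<le> norm x * C"
    using bounded_linear.pos_bounded by blast
  have Cb: "\<And>x. norm (P x) \<le> C * norm x" using C(2) by (simp add: mult.commute)
  have XL: "X (Lop JB Q l z) = Lop JA P l (X z)" for l z
    unfolding Lop_def using cbounded_linear(2)[OF X] cbounded_cscale[OF X] inter by simp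
  have intw: "res JA P l (X u) = X (res JB Q l u)" if "l \<notin> cspectrum JA P" "l \<notin> cspectrum JB Q" for l
  proof -
    have "res JA P l (X u) = res JA P l (X (Lop JB Q l (res JB Q l u)))"
      using res_inverse(3)[OF that(2)] by simp
    also have "\<dots> = X (res JB Q l u)" unfolding XL res_inverse(2)[OF that(1)] ..
    finally show ?thesis .
  qed
  define l1 where "l1 = complex_of_real (C + 1)"
  have l1: "l1 \<notin> cspectrum JA P" using large[OF csA P Cb, of l1] C(1) by (simp add: l1_def)
  have key: "phi JA v (res JA P l1 (X u)) = 0" for v
  proof -
    define psi1 where "psi1 = phi JA v"
    define psi2 where "psi2 = (\<lambda>w. phi JA v (X w))"
    have p1: "bounded_linear psi1" "\<And>w. psi1 (JA w) = \<i> * psi1 w"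
      unfolding psi1_def using phi_bl phi_J[OF csA] by auto
    have XJ: "X (JB w) = JA (X w)" for w using X unfolding cbounded_def by blast
    have p2: "bounded_linear psi2" "\<And>w. psi2 (JB w) = \<i> * psi2 w"
      unfolding psi2_def
      subgoal by (rule bounded_linear_compose[OF phi_bl]) (use X in \<open>simp add: cbounded_def\<close>)
      subgoal for w by (simp add: XJ phi_J[OF csA])
      done
    define h where "h = (\<lambda>l. if l \<in> cspectrum JA P then psi2 (res JB Q l u) else psi1 (res JA P l (X u)))"
    have holo: "h holomorphic_on UNIV"
      unfolding holomorphic_on_def
    proof
      fix l0 :: complex
      show "h field_differentiable at l0 within UNIV"
      proof (cases "l0 \<in> cspectrum JA P")
        case False
        have d: "((\<lambda>l. psi1 (res JA P l (X u))) has_field_derivative psi1 (res JA P l0 (res JA P l0 (X u)))) (at l0)"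
          by (rule res_deriv[OF csA P False p1])
        have "eventually (\<lambda>l. psi1 (res JA P l (X u)) = h l) (nhds l0)"
          using res_open[OF csA P False] by eventually_elim (simp add: h_def)
        then have "(h has_field_derivative psi1 (res JA P l0 (res JA P l0 (X u)))) (at l0)"
          using DERIV_cong_ev[OF refl _ refl, THEN iffD1, OF _ d] by blast
        then show ?thesis unfolding field_differentiable_def by auto
      next
        case True
        then have nq: "l0 \<notin> cspectrum JB Q" using disj by auto
        have d: "((\<lambda>l. psi2 (res JB Q l u)) has_field_derivative psi2 (res JB Q l0 (res JB Q l0 u))) (at l0)"
          by (rule res_deriv[OF csB Q nq p2])
        have "eventually (\<lambda>l. psi2 (res JB Q l u) = h l) (nhds l0)"
          using res_open[OF csB Q nq] by eventually_elim (auto simp: h_def psi1_def psi2_def intw)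
        then have "(h has_field_derivative psi2 (res JB Q l0 (res JB Q l0 u))) (at l0)"
          using DERIV_cong_ev[OF refl _ refl, THEN iffD1, OF _ d] by blast
        then show ?thesis unfolding field_differentiable_def by auto
      qed
    qed
    obtain Cp where Cp: "Cp > 0" "\<And>x. norm (psi1 x) \<le> norm x * Cp"
      using bounded_linear.pos_bounded[OF p1(1)] by blast
    have lim: "(h \<longlongrightarrow> 0) at_infinity"
    proof (rule Lim_null_comparison)
      show "eventually (\<lambda>l. norm (h l) \<le> (2 * Cp * norm (X u)) * norm (inverse l)) at_infinity"
        unfolding eventually_at_infinity
      proof (rule exI[of _ "2 * C + 1"], intro allI impI)
        fix l :: complex assume lb: "2 * C + 1 \<le> norm l"
        have big: "C < cmod l" using lb C(1) by simp
        from large[OF csA P Cb C(1)[THEN less_imp_le] big]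
        have ns: "l \<notin> cspectrum JA P" and rb: "\<And>y. norm (res JA P l y) \<le> norm y / (cmod l - C)" by auto
        have "norm (h l) = norm (psi1 (res JA P l (X u)))" using ns by (simp add: h_def)
        also have "\<dots> \<le> norm (res JA P l (X u)) * Cp" by (rule Cp(2))
        also have "\<dots> \<le> (norm (X u) / (cmod l - C)) * Cp" by (rule mult_right_mono[OF rb]) (use Cp in simp)
        also have "\<dots> \<le> (2 * Cp * norm (X u)) * norm (inverse l)"
        proof -
          have a: "cmod l - C > 0" "cmod l > 0" using lb C(1) by auto
          have "1 / (cmod l - C) \<le> 2 / cmod l" using lb C(1) a by (simp add: divide_simps)
          then have "norm (X u) * Cp * (1 / (cmod l - C)) \<le> norm (X u) * Cp * (2 / cmod l)"
            by (rule mult_left_mono) (use Cp in simp)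
          then show ?thesis by (simp add: norm_inverse norm_divide field_simps)
        qed
        finally show "norm (h l) \<le> (2 * Cp * norm (X u)) * norm (inverse l)" .
      qed
      have "((\<lambda>l. norm (inverse l)) \<longlongrightarrow> 0) (at_infinity :: complex filter)"
        using tendsto_norm_zero[OF tendsto_inverse_0] .
      then show "((\<lambda>l. (2 * Cp * norm (X u)) * norm (inverse l)) \<longlongrightarrow> 0) (at_infinity :: complex filter)"
        by (rule tendsto_mult_right_zero)
    qed
    have "h l1 = 0" by (rule Liouville_weak[OF holo lim])
    then show ?thesis using l1 by (simp add: h_def psi1_def)
  qed
  define w where "w = res JA P l1 (X u)"
  have "inner w w = 0" using key[of w] phi_self[of JA w] by (simp add: w_def)
  then have "w = 0" by simp
  have "X u = Lop JA P l1 w" unfolding w_def res_inverse(3)[OF l1] ..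
  also have "\<dots> = 0" unfolding \<open>w = 0\<close> Lop_def using cbounded_linear(3)[OF P] cscale_zero_right[OF csA] by simp
  finally show ?thesis .
qed




lemma dsum_apply [simp]: "dsum A B (x, y) = (A x, B y)"
  by (simp add: dsum_def)

lemma dsum_eq: "dsum A B = (\<lambda>z. (A (fst z), B (snd z)))"
  by (simp add: dsum_def fun_eq_iff split: prod.splits)

lemma dsum_cbounded:
  assumes "cbounded JA JA MA" "cbounded JB JB MB"
  shows "cbounded (dsum JA JB) (dsum JA JB) (dsum MA MB)"
proof -
  have "bounded_linear MA" "bounded_linear MB" using assms unfolding cbounded_def by auto
  then have "bounded_linear (\<lambda>z. (MA (fst z), MB (snd z)))"
    by (intro bounded_linear_Pair bounded_linear_compose[OF _ bounded_linear_fst]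
        bounded_linear_compose[OF _ bounded_linear_snd])
  then show ?thesis using assms unfolding cbounded_def dsum_eq by auto
qed

lemma block_cb:
  assumes M: "cbounded (dsum JA JB) (dsum JA JB) M" and csA: "complex_structure JA" and csB: "complex_structure JB"
  shows "cbounded JA JA (\<lambda>x. fst (M (x, 0)))" "cbounded JB JA (\<lambda>y. fst (M (0, y)))"
    "cbounded JA JB (\<lambda>x. snd (M (x, 0)))" "cbounded JB JB (\<lambda>y. snd (M (0, y)))"
proof -
  have bl: "bounded_linear M" and MJ: "\<And>z. M (dsum JA JB z) = dsum JA JB (M z)"
    using M unfolding cbounded_def by auto
  have b1: "bounded_linear (\<lambda>x. M (x, 0))"
    by (rule bounded_linear_compose[OF bl]) (intro bounded_linear_Pair bounded_linear_ident bounded_linear_zero)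
  have b2: "bounded_linear (\<lambda>y. M (0, y))"
    by (rule bounded_linear_compose[OF bl]) (intro bounded_linear_Pair bounded_linear_ident bounded_linear_zero)
  have j1: "M (JA x, 0) = dsum JA JB (M (x, 0))" for x
    using MJ[of "(x, 0)"] cs_J_linear(5)[OF csB] by simp
  have j2: "M (0, JB y) = dsum JA JB (M (0, y))" for y
    using MJ[of "(0, y)"] cs_J_linear(5)[OF csA] by simp
  show "cbounded JA JA (\<lambda>x. fst (M (x, 0)))" unfolding cbounded_def
    using bounded_linear_compose[OF bounded_linear_fst b1] j1 by (simp add: dsum_eq)
  show "cbounded JB JA (\<lambda>y. fst (M (0, y)))" unfolding cbounded_def
    using bounded_linear_compose[OF bounded_linear_fst b2] j2 by (simp add: dsum_eq)
  show "cbounded JA JB (\<lambda>x. snd (M (x, 0)))" unfolding cbounded_def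
    using bounded_linear_compose[OF bounded_linear_snd b1] j1 by (simp add: dsum_eq)
  show "cbounded JB JB (\<lambda>y. snd (M (0, y)))" unfolding cbounded_def
    using bounded_linear_compose[OF bounded_linear_snd b2] j2 by (simp add: dsum_eq)
qed

lemma anticomm:
  assumes "cbounded J1 J1 M" "cbounded J1 J1 N" "\<And>x. M (M x) = 0" "\<And>x. N (N x) = 0"
  shows "M (N (M x)) - N (M (M x)) = - M (M (N x) - N (M x))"
  using assms(3,4) cbounded_linear[OF assms(1)] cbounded_linear[OF assms(2)] by simp

lemma block_zero:
  fixes JA :: "'a::{real_inner,complete_space} \<Rightarrow> 'a" and JB :: "'b::{real_inner,complete_space} \<Rightarrow> 'b"
  assumes csA: "complex_structure JA" and csB: "complex_structure JB"
    and A: "cbounded JA JA A" and B: "cbounded JB JB B"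
    and disj: "cspectrum JA (A \<circ> A) \<inter> cspectrum JB (B \<circ> B) = {}"
    and M: "cbounded (dsum JA JB) (dsum JA JB) M"
    and comm: "\<And>z. dsum A B (dsum A B (M z)) = M (dsum A B (dsum A B z))"
  shows "M (x, y) = (fst (M (x, 0)), snd (M (0, y)))"
proof -
  note bc = block_cb[OF M csA csB]
  have AA: "cbounded JA JA (A \<circ> A)" by (rule cbounded_comp[OF A A])
  have BB: "cbounded JB JB (B \<circ> B)" by (rule cbounded_comp[OF B B])
  have A0: "A 0 = 0" and B0: "B 0 = 0" using cbounded_linear(3)[OF A] cbounded_linear(3)[OF B] by auto
  have z12: "fst (M (0, y')) = 0" for y'
  proof (rule rosenblum[OF csA csB AA BB bc(2) disj])
    fix y show "(A \<circ> A) (fst (M (0, y))) = fst (M (0, (B \<circ> B) y))"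
      using arg_cong[OF comm[of "(0, y)"], of fst] A0 by (simp add: dsum_eq)
  qed
  have disj': "cspectrum JB (B \<circ> B) \<inter> cspectrum JA (A \<circ> A) = {}" using disj by blast
  have z21: "snd (M (x', 0)) = 0" for x'
  proof (rule rosenblum[OF csB csA BB AA bc(3) disj'])
    fix x show "(B \<circ> B) (snd (M (x, 0))) = snd (M ((A \<circ> A) x, 0))"
      using arg_cong[OF comm[of "(x, 0)"], of snd] B0 by (simp add: dsum_eq)
  qed
  have "M (x, y) = M ((x, 0) + (0, y))" by simp
  also have "\<dots> = M (x, 0) + M (0, y)" by (rule cbounded_linear(1)[OF M])
  also have "\<dots> = (fst (M (x, 0)), snd (M (0, y)))"
    using z12[of y] z21[of x] by (simp add: prod_eq_iff)
  finally show ?thesis .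
qed

theorem proposition2p02:
  fixes JA :: "'a::{real_inner, complete_space} \<Rightarrow> 'a"
    and JB :: "'b::{real_inner, complete_space} \<Rightarrow> 'b"
    and J :: "'c::{real_inner, complete_space} \<Rightarrow> 'c"
    and A :: "'a \<Rightarrow> 'a" and B :: "'b \<Rightarrow> 'b" and T :: "'c \<Rightarrow> 'c"
    and S :: "'a \<times> 'b \<Rightarrow> 'c" and Sinv :: "'c \<Rightarrow> 'a \<times> 'b"
  assumes "complex_structure JA" and "complex_structure JB" and "complex_structure J"
    and "cbounded JA JA A" and "cbounded JB JB B" and "cbounded J J T"
    and "cspectrum JA (A \<circ> A) \<inter> cspectrum JB (B \<circ> B) = {}"
    and "cbounded (dsum JA JB) J S" and "cbounded J (dsum JA JB) Sinv"
    and "Sinv \<circ> S = id" and "S \<circ> Sinv = id"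
    and "T = S \<circ> dsum A B \<circ> Sinv"
  shows "c_nil2 J T \<longleftrightarrow> c_nil2 JA A \<and> c_nil2 JB B"
proof -
  note csA = assms(1) and csB = assms(2) and cs = assms(3) and Ab = assms(4) and Bb = assms(5)
    and disj = assms(7) and Sb = assms(8) and Sib = assms(9)
  have SS: "Sinv (S z) = z" for z using assms(10) by (metis comp_apply id_apply)
  have SS': "S (Sinv x) = x" for x using assms(11) by (metis comp_apply id_apply)
  have Tdef: "T x = S (dsum A B (Sinv x))" for x using assms(12) by simp
  note SL = cbounded_linear[OF Sb] and SiL = cbounded_linear[OF Sib]
  show ?thesis
  proof
    assume "c_nil2 J T"
    then obtain M N where M: "cbounded J J M" and N: "cbounded J J N"
      and MM: "M \<circ> M = (\<lambda>x. 0)" and NN: "N \<circ> N = (\<lambda>x. 0)" and TMN: "T = (\<lambda>x. M (N x) - N (M x))"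
      unfolding c_nil2_def by blast
    define M' where "M' = (\<lambda>z. Sinv (M (S z)))"
    define N' where "N' = (\<lambda>z. Sinv (N (S z)))"
    have M'b: "cbounded (dsum JA JB) (dsum JA JB) M'" unfolding M'_def
      by (rule cbounded_comp'[OF cbounded_comp'[OF Sb M] Sib])
    have N'b: "cbounded (dsum JA JB) (dsum JA JB) N'" unfolding N'_def
      by (rule cbounded_comp'[OF cbounded_comp'[OF Sb N] Sib])
    have M'M': "M' (M' z) = 0" for z
      using MM SiL(3) unfolding M'_def SS' by (simp add: fun_eq_iff)
    have N'N': "N' (N' z) = 0" for z
      using NN SiL(3) unfolding N'_def SS' by (simp add: fun_eq_iff)
    have D: "dsum A B z = M' (N' z) - N' (M' z)" for z
    proof -
      have "dsum A B z = Sinv (T (S z))" unfolding Tdef SS ..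
      also have "\<dots> = M' (N' z) - N' (M' z)" unfolding TMN M'_def N'_def SS' SiL(2) ..
      finally show ?thesis .
    qed
    have Dfun: "dsum A B = (\<lambda>z. M' (N' z) - N' (M' z))" using D by (simp add: fun_eq_iff)
    have anti: "dsum A B (M' z) = - M' (dsum A B z)" for z
      unfolding Dfun by (rule anticomm[OF M'b N'b M'M' N'N'])
    have comm: "dsum A B (dsum A B (M' z)) = M' (dsum A B (dsum A B z))" for z
      using anti cbounded_linear(4)[OF M'b] cbounded_linear(4)[OF dsum_cbounded[OF Ab Bb]] by simp
    have antiN: "dsum A B (N' z) = - N' (dsum A B z)" for z
      unfolding D using N'N' cbounded_linear[OF N'b] cbounded_linear[OF M'b] by simp
    have commN: "dsum A B (dsum A B (N' z)) = N' (dsum A B (dsum A B z))" for z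
      using antiN cbounded_linear(4)[OF N'b] cbounded_linear(4)[OF dsum_cbounded[OF Ab Bb]] by simp
    note Mblk = block_zero[OF csA csB Ab Bb disj M'b comm]
    note Nblk = block_zero[OF csA csB Ab Bb disj N'b commN]
    note bM = block_cb[OF M'b csA csB] and bN = block_cb[OF N'b csA csB]
    have M'0: "M' (x, 0) = (fst (M' (x, 0)), 0)" "M' (0, y) = (0, snd (M' (0, y)))" for x y
      using Mblk[of x 0] Mblk[of 0 y] cbounded_linear(3)[OF bM(3)] cbounded_linear(3)[OF bM(2)]
      by simp_all
    have N'0: "N' (x, 0) = (fst (N' (x, 0)), 0)" "N' (0, y) = (0, snd (N' (0, y)))" for x y
      using Nblk[of x 0] Nblk[of 0 y] cbounded_linear(3)[OF bN(3)] cbounded_linear(3)[OF bN(2)]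
      by simp_all
    have "c_nil2 JA A"
      unfolding c_nil2_def
    proof (intro exI conjI)
      show "cbounded JA JA (\<lambda>x. fst (M' (x, 0)))" by (rule bM(1))
      show "cbounded JA JA (\<lambda>x. fst (N' (x, 0)))" by (rule bN(1))
      show "(\<lambda>x. fst (M' (x, 0))) \<circ> (\<lambda>x. fst (M' (x, 0))) = (\<lambda>x. 0)"
      proof
        fix x
        have "M' (M' (x, 0)) = 0" by (rule M'M')
        then show "((\<lambda>x. fst (M' (x, 0))) \<circ> (\<lambda>x. fst (M' (x, 0)))) x = 0"
          by (subst (asm) M'0(1)) simp
      qed
      show "(\<lambda>x. fst (N' (x, 0))) \<circ> (\<lambda>x. fst (N' (x, 0))) = (\<lambda>x. 0)"
      proof
        fix x
        have "N' (N' (x, 0)) = 0" by (rule N'N')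
        then show "((\<lambda>x. fst (N' (x, 0))) \<circ> (\<lambda>x. fst (N' (x, 0)))) x = 0"
          by (subst (asm) N'0(1)) simp
      qed
      show "A = (\<lambda>x. fst (M' (fst (N' (x, 0)), 0)) - fst (N' (fst (M' (x, 0)), 0)))"
      proof
        fix x
        have "dsum A B (x, 0) = M' (N' (x, 0)) - N' (M' (x, 0))" by (rule D)
        then have "A x = fst (M' (N' (x, 0)) - N' (M' (x, 0)))" by (metis dsum_apply fst_conv)
        also have "\<dots> = fst (M' (fst (N' (x, 0)), 0)) - fst (N' (fst (M' (x, 0)), 0))"
          by (subst M'0(1), subst N'0(1)) simp
        finally show "A x = fst (M' (fst (N' (x, 0)), 0)) - fst (N' (fst (M' (x, 0)), 0))" .
      qed
    qed
    moreover have "c_nil2 JB B"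
      unfolding c_nil2_def
    proof (intro exI conjI)
      show "cbounded JB JB (\<lambda>y. snd (M' (0, y)))" by (rule bM(4))
      show "cbounded JB JB (\<lambda>y. snd (N' (0, y)))" by (rule bN(4))
      show "(\<lambda>y. snd (M' (0, y))) \<circ> (\<lambda>y. snd (M' (0, y))) = (\<lambda>x. 0)"
      proof
        fix y
        have "M' (M' (0, y)) = 0" by (rule M'M')
        then show "((\<lambda>y. snd (M' (0, y))) \<circ> (\<lambda>y. snd (M' (0, y)))) y = 0"
          by (subst (asm) M'0(2)) simp
      qed
      show "(\<lambda>y. snd (N' (0, y))) \<circ> (\<lambda>y. snd (N' (0, y))) = (\<lambda>x. 0)"
      proof
        fix y
        have "N' (N' (0, y)) = 0" by (rule N'N')
        then show "((\<lambda>y. snd (N' (0, y))) \<circ> (\<lambda>y. snd (N' (0, y)))) y = 0"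
          by (subst (asm) N'0(2)) simp
      qed
      show "B = (\<lambda>y. snd (M' (0, snd (N' (0, y)))) - snd (N' (0, snd (M' (0, y)))))"
      proof
        fix y
        have "dsum A B (0, y) = M' (N' (0, y)) - N' (M' (0, y))" by (rule D)
        then have "B y = snd (M' (N' (0, y)) - N' (M' (0, y)))" by (metis dsum_apply snd_conv)
        also have "\<dots> = snd (M' (0, snd (N' (0, y)))) - snd (N' (0, snd (M' (0, y))))"
          by (subst M'0(2), subst N'0(2)) simp
        finally show "B y = snd (M' (0, snd (N' (0, y)))) - snd (N' (0, snd (M' (0, y))))" .
      qed
    qed
    ultimately show "c_nil2 JA A \<and> c_nil2 JB B" by blast
  next
    assume "c_nil2 JA A \<and> c_nil2 JB B"
    then obtain MA NA MB NB where MA: "cbounded JA JA MA" and NA: "cbounded JA JA NA"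
      and MAA: "MA \<circ> MA = (\<lambda>x. 0)" and NAA: "NA \<circ> NA = (\<lambda>x. 0)" and AMN: "A = (\<lambda>x. MA (NA x) - NA (MA x))"
      and MB: "cbounded JB JB MB" and NB: "cbounded JB JB NB"
      and MBB: "MB \<circ> MB = (\<lambda>x. 0)" and NBB: "NB \<circ> NB = (\<lambda>x. 0)" and BMN: "B = (\<lambda>x. MB (NB x) - NB (MB x))"
      unfolding c_nil2_def by blast
    define M where "M = (\<lambda>x. S (dsum MA MB (Sinv x)))"
    define N where "N = (\<lambda>x. S (dsum NA NB (Sinv x)))"
    show "c_nil2 J T"
      unfolding c_nil2_def
    proof (intro exI conjI)
      show "cbounded J J M" unfolding M_def
        by (rule cbounded_comp'[OF cbounded_comp'[OF Sib dsum_cbounded[OF MA MB]] Sb])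
      show "cbounded J J N" unfolding N_def
        by (rule cbounded_comp'[OF cbounded_comp'[OF Sib dsum_cbounded[OF NA NB]] Sb])
      show "M \<circ> M = (\<lambda>x. 0)"
        using MAA MBB SL(3) unfolding M_def by (simp add: fun_eq_iff SS dsum_eq zero_prod_def)
      show "N \<circ> N = (\<lambda>x. 0)"
        using NAA NBB SL(3) unfolding N_def by (simp add: fun_eq_iff SS dsum_eq zero_prod_def)
      show "T = (\<lambda>x. M (N x) - N (M x))"
      proof
        fix x
        have "M (N x) - N (M x) = S (dsum MA MB (dsum NA NB (Sinv x)) - dsum NA NB (dsum MA MB (Sinv x)))"
          unfolding M_def N_def SS SL(2) ..
        also have "dsum MA MB (dsum NA NB (Sinv x)) - dsum NA NB (dsum MA MB (Sinv x)) = dsum A B (Sinv x)"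
          unfolding AMN BMN by (simp add: dsum_eq)
        finally show "T x = M (N x) - N (M x)" unfolding Tdef by simp
      qed
    qed
  qed
qed


end
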